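(* Let $\tau$ be a counterclockwise permutation for monotone linear functions $f_1,\dots,f_n$. Then the cyclic sequence $(f^{\tau_0},f^{\tau_1},\dots,f^{\tau_{n-1}})$ of composites of the shifts of $\tau$ is unimodal.
   Context: A linear function is $f(x)=ax+b$; monotone means $a>0$; identical means $f(x)=x$. $\vec f=(b,1-a)^\top$ and $\theta(f)\in[0,2\pi)$ is its polar angle ($\bot$ if $\vec f=0$). For a permutation $\sigma$ of $[n]$, $f^\sigma=f_{\sigma(n)}\circ\cdots\circ f_{\sigma(1)}$; all $f^\sigma$ have the same slope, so they are totally ordered by the pointwise order. $\sigma$ is counterclockwise if, after discarding positions $i$ with $f_{\sigma(i)}$ identical, there is $k$ with $\theta(f_{\sigma(k)})\le\cdots\le\theta(f_{\sigma(n)})\le\theta(f_{\sigma(1)})\le\cdots\le\theta(f_{\sigma(k-1)})$. The $k$-shift ($k=0,\dots,n-1$) is $\tau_k(i)=\tau(i+k)$ for $i\le n-k$ and $\tau_k(i)=\tau(i+k-n)$ otherwise ($\tau_0=\tau$). A cyclic sequence $(x_0,\dots,x_{n-1})$ in a totally ordered set (indices mod $n$) is unimodal if there are $k,\ell$ with $x_k\le x_{k+1}\le\cdots\le x_\ell\ge x_{\ell+1}\ge\cdots\ge x_{k-1}\ge x_k$. *)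

theory Defs
  imports Complex_Main
begin

definition lin_fun :: "real \<times> real \<Rightarrow> real \<Rightarrow> real" where
  "lin_fun p = (\<lambda>x. fst p * x + snd p)"

definition monotone_lin :: "real \<times> real \<Rightarrow> bool" where
  "monotone_lin p \<longleftrightarrow> fst p > 0"

definition identical_lin :: "real \<times> real \<Rightarrow> bool" where
  "identical_lin p \<longleftrightarrow> lin_fun p = id"

definition lin_vec :: "real \<times> real \<Rightarrow> real \<times> real" where
  "lin_vec p = (snd p, 1 - fst p)"

definition polar_angle :: "real \<times> real \<Rightarrow> real option" where
  "polar_angle v = (if v = (0, 0) then None else
     Some (THE t. 0 \<le> t \<and> t < 2 * pi \<and>
             fst v = sqrt ((fst v)\<^sup>2 + (snd v)\<^sup>2) * cos t \<and>
             snd v = sqrt ((fst v)\<^sup>2 + (snd v)\<^sup>2) * sin t))"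

definition theta :: "real \<times> real \<Rightarrow> real option" where
  "theta p = polar_angle (lin_vec p)"

fun comp_upto :: "(nat \<Rightarrow> real \<times> real) \<Rightarrow> (nat \<Rightarrow> nat) \<Rightarrow> nat \<Rightarrow> real \<Rightarrow> real" where
  "comp_upto f \<sigma> 0 = id"
| "comp_upto f \<sigma> (Suc m) = lin_fun (f (\<sigma> (Suc m))) \<circ> comp_upto f \<sigma> m"

definition composite :: "(nat \<Rightarrow> real \<times> real) \<Rightarrow> nat \<Rightarrow> (nat \<Rightarrow> nat) \<Rightarrow> real \<Rightarrow> real" where
  "composite f n \<sigma> = comp_upto f \<sigma> n"

definition counterclockwise :: "(nat \<Rightarrow> real \<times> real) \<Rightarrow> nat \<Rightarrow> (nat \<Rightarrow> nat) \<Rightarrow> bool" where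
  "counterclockwise f n \<sigma> \<longleftrightarrow>
     (let L = [the (theta (f (\<sigma> i))). i \<leftarrow> [1..<n+1], \<not> identical_lin (f (\<sigma> i))]
      in \<exists>k. sorted (rotate k L))"

definition shift :: "nat \<Rightarrow> (nat \<Rightarrow> nat) \<Rightarrow> nat \<Rightarrow> nat \<Rightarrow> nat" where
  "shift n \<tau> k i = (if i \<le> n - k then \<tau> (i + k) else \<tau> (i + k - n))"

definition cyclic_unimodal :: "nat \<Rightarrow> (nat \<Rightarrow> 'a::order) \<Rightarrow> bool" where
  "cyclic_unimodal n x \<longleftrightarrow>
     (\<exists>k<n. \<exists>l<n.
        (\<forall>j < (l + n - k) mod n. x ((k + j) mod n) \<le> x ((k + j + 1) mod n)) \<and>
        (\<forall>j. (l + n - k) mod n \<le> j \<and> j < n \<longrightarrow> x ((k + j) mod n) \<ge> x ((k + j + 1) mod n)))"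

end

theory Submission
  imports Defs
begin


definition cr :: "real \<times> real \<Rightarrow> real \<times> real \<Rightarrow> real" where
  "cr u w = fst u * snd w - snd u * fst w"

lemma sc_per: "sin (x + 2*pi*of_int k) = sin x \<and> cos (x + 2*pi*of_int k) = cos x"
  using sin_cos_eq_iff[of "x + 2*pi*of_int k" x] by auto

lemma reduce_2pi:
  fixes y :: real
  obtains k :: int where "0 \<le> y - 2*pi*of_int k" "y - 2*pi*of_int k < 2*pi"
proof -
  define k where "k = \<lfloor>y / (2*pi)\<rfloor>"
  have "of_int k \<le> y/(2*pi)" "y/(2*pi) < of_int k + 1" unfolding k_def by linarith+
  hence "2*pi*of_int k \<le> y" "y < 2*pi*(of_int k + 1)"
    by (simp_all add: field_simps)
  thus ?thesis using that[of k] by (simp add: algebra_simps)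
qed

lemma sin_pos_range: "0 \<le> x \<Longrightarrow> x < 2*pi \<Longrightarrow> sin x > 0 \<Longrightarrow> 0 < x \<and> x < pi"
proof -
  assume a: "0 \<le> x" "x < 2*pi" "sin x > 0"
  have "x \<noteq> 0" using a by auto
  moreover have "\<not> pi \<le> x" using sin_le_zero[of x] a by auto
  ultimately show ?thesis using a by auto
qed

lemma lift_between:
  assumes s1: "sin (\<phi> - \<alpha>) > 0" and s2: "sin (\<phi> - \<beta>) < 0"
    and ab: "\<alpha> \<le> \<beta>" "\<beta> \<le> \<alpha> + 2*pi"
  shows "\<exists>\<mu>. \<alpha> < \<mu> \<and> \<mu> < \<beta> \<and> cos \<mu> = cos \<phi> \<and> sin \<mu> = sin \<phi>"
proof -
  obtain k :: int where k: "0 \<le> (\<phi> - \<alpha>) - 2*pi*of_int k" "(\<phi> - \<alpha>) - 2*pi*of_int k < 2*pi"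
    using reduce_2pi by blast
  define \<mu> where "\<mu> = \<phi> + 2*pi*of_int (-k)"
  have e1: "\<mu> - \<alpha> = (\<phi> - \<alpha>) + 2*pi*of_int (-k)" unfolding \<mu>_def by simp
  have e2: "\<mu> - \<beta> = (\<phi> - \<beta>) + 2*pi*of_int (-k)" unfolding \<mu>_def by simp
  have "sin (\<mu> - \<alpha>) = sin (\<phi> - \<alpha>)" unfolding e1 using sc_per by blast
  hence sa: "sin (\<mu> - \<alpha>) > 0" using s1 by simp
  have "sin (\<mu> - \<beta>) = sin (\<phi> - \<beta>)" unfolding e2 using sc_per by blast
  hence sb: "sin (\<mu> - \<beta>) < 0" using s2 by simp
  have r: "0 \<le> \<mu> - \<alpha>" "\<mu> - \<alpha> < 2*pi" using k e1 by auto
  have r2: "0 < \<mu> - \<alpha> \<and> \<mu> - \<alpha> < pi" using sin_pos_range[OF r sa] .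
  have "\<mu> < \<beta>"
  proof (rule ccontr)
    assume "\<not> \<mu> < \<beta>"
    hence "0 \<le> \<mu> - \<beta>" "\<mu> - \<beta> \<le> pi" using r2 ab by auto
    hence "sin (\<mu> - \<beta>) \<ge> 0" by (rule sin_ge_zero)
    thus False using sb by simp
  qed
  moreover have "cos \<mu> = cos \<phi> \<and> sin \<mu> = sin \<phi>" unfolding \<mu>_def using sc_per[of \<phi> "-k"] by simp
  ultimately show ?thesis using r2 by auto
qed

lemma four_contra:
  assumes "\<mu>1 < \<mu>2" "\<mu>2 < \<mu>3" "\<mu>3 < \<mu>4" "\<mu>4 < \<mu>1 + 2*pi"
    and "sin (\<mu>1 - \<gamma>) > 0" "sin (\<mu>2 - \<gamma>) < 0" "sin (\<mu>3 - \<gamma>) > 0" "sin (\<mu>4 - \<gamma>) < 0"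
  shows False
proof -
  obtain k :: int where k: "0 \<le> (\<mu>1 - \<gamma>) - 2*pi*of_int k" "(\<mu>1 - \<gamma>) - 2*pi*of_int k < 2*pi"
    using reduce_2pi by blast
  define d where "d i = i - \<gamma> + 2*pi*of_int (-k)" for i
  have sd: "sin (d i) = sin (i - \<gamma>)" for i unfolding d_def using sc_per[of "i - \<gamma>" "-k"] by simp
  have d1: "0 < d \<mu>1 \<and> d \<mu>1 < pi" using sin_pos_range[of "d \<mu>1"] k assms sd unfolding d_def by auto
  have dlt: "d \<mu>1 < d \<mu>2" "d \<mu>2 < d \<mu>3" "d \<mu>3 < d \<mu>4" "d \<mu>4 < d \<mu>1 + 2*pi"
    using assms unfolding d_def by auto
  have per: "sin (y - 2*pi) = sin y" for y using sc_per[of "y - 2*pi" 1] by simp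
  have "\<not> d \<mu>2 \<le> pi"
  proof
    assume "d \<mu>2 \<le> pi" thus False using sin_ge_zero[of "d \<mu>2"] d1 dlt assms sd[of \<mu>2] by auto
  qed
  have "\<not> 2*pi \<le> d \<mu>2"
  proof
    assume "2*pi \<le> d \<mu>2" thus False using sin_ge_zero[of "d \<mu>2 - 2*pi"] d1 dlt assms sd[of \<mu>2] per by auto
  qed
  have "\<not> d \<mu>3 < 2*pi"
  proof
    assume "d \<mu>3 < 2*pi" thus False using sin_le_zero[of "d \<mu>3"] \<open>\<not> d \<mu>2 \<le> pi\<close> dlt assms sd[of \<mu>3] by auto
  qed
  have "sin (d \<mu>4 - 2*pi) > 0"
    using sin_gt_zero[of "d \<mu>4 - 2*pi"] \<open>\<not> d \<mu>3 < 2*pi\<close> dlt d1 by auto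
  thus False using per sd[of \<mu>4] assms by auto
qed

lemma polar_cr: "cr (r1 * cos a, r1 * sin a) (r2 * cos b, r2 * sin b) = r1 * r2 * sin (b - a)"
  unfolding cr_def by (simp add: sin_diff algebra_simps)

lemma helperH:
  assumes "\<rho>1 > 0" "\<rho>2 > 0" "\<alpha> \<le> \<beta>" "\<beta> \<le> \<alpha> + 2*pi"
    and c1: "cr (\<rho>1 * cos \<alpha>, \<rho>1 * sin \<alpha>) W > 0" and c2: "cr (\<rho>2 * cos \<beta>, \<rho>2 * sin \<beta>) W < 0"
  shows "\<exists>\<mu> t. \<alpha> < \<mu> \<and> \<mu> < \<beta> \<and> W = (t * cos \<mu>, t * sin \<mu>) \<and> t > 0"
proof -
  obtain X C where W: "W = (X, C)" by (cases W)
  define r where "r = sqrt (X\<^sup>2 + C\<^sup>2)"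
  have "r \<noteq> 0"
  proof
    assume "r = 0" hence "X = 0" "C = 0" unfolding r_def by (auto simp: power2_eq_square)
    thus False using c1 W unfolding cr_def by simp
  qed
  moreover have "r \<ge> 0" unfolding r_def by simp
  ultimately have rp: "r > 0" by simp
  have "(X/r)\<^sup>2 + (C/r)\<^sup>2 = 1"
  proof -
    have "r\<^sup>2 = X\<^sup>2 + C\<^sup>2" unfolding r_def by simp
    have "(X/r)\<^sup>2 + (C/r)\<^sup>2 = (X\<^sup>2 + C\<^sup>2) / r\<^sup>2" by (simp add: power_divide add_divide_distrib)
    also have "\<dots> = r\<^sup>2 / r\<^sup>2" using \<open>r\<^sup>2 = X\<^sup>2 + C\<^sup>2\<close> by simp
    also have "\<dots> = 1" using rp by simp
    finally show ?thesis .
  qed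
  then obtain \<phi> where ph: "X/r = cos \<phi>" "C/r = sin \<phi>" using sincos_total_2pi by metis
  have Wp: "W = (r * cos \<phi>, r * sin \<phi>)" using ph rp W by (simp add: field_simps)
  have "\<rho>1 * r * sin (\<phi> - \<alpha>) > 0" using c1 Wp polar_cr by simp
  hence s1: "sin (\<phi> - \<alpha>) > 0" using assms rp by (smt (verit) mult_pos_pos zero_less_mult_iff)
  have "\<rho>2 * r * sin (\<phi> - \<beta>) < 0" using c2 Wp polar_cr by simp
  hence s2: "sin (\<phi> - \<beta>) < 0" using assms rp by (smt (verit) mult_pos_pos mult_less_0_iff)
  obtain \<mu> where "\<alpha> < \<mu>" "\<mu> < \<beta>" "cos \<mu> = cos \<phi>" "sin \<mu> = sin \<phi>"
    using lift_between[OF s1 s2 assms(3,4)] by blast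
  thus ?thesis using Wp rp by metis
qed



lemma sign_change:
  fixes D :: "nat \<Rightarrow> real"
  assumes "i < j" "D i > 0" "D j < 0"
  shows "\<exists>i' j'. i \<le> i' \<and> i' < j' \<and> j' \<le> j \<and> D i' > 0 \<and> D j' < 0 \<and> (\<forall>k. i' < k \<and> k < j' \<longrightarrow> D k = 0)"
  using assms
proof (induction "j - i" arbitrary: i rule: less_induct)
  case less
  define k where "k = (LEAST k. i < k \<and> D k \<noteq> 0)"
  have ex: "i < j \<and> D j \<noteq> 0" using less by auto
  have k1: "i < k \<and> D k \<noteq> 0" unfolding k_def by (rule LeastI[of _ j]) (rule ex)
  have k2: "k \<le> j" unfolding k_def by (rule Least_le) (rule ex)
  have k3: "\<forall>m. i < m \<and> m < k \<longrightarrow> D m = 0" unfolding k_def using not_less_Least by blast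
  show ?case
  proof (cases "D k < 0")
    case True thus ?thesis using k1 k2 k3 less.prems by (intro exI[of _ i] exI[of _ k]) auto
  next
    case False
    hence "D k > 0" using k1 by auto
    moreover have "k < j" using k2 \<open>D k > 0\<close> less.prems by (cases "k = j") auto
    ultimately obtain i' j' where "k \<le> i' \<and> i' < j' \<and> j' \<le> j \<and> D i' > 0 \<and> D j' < 0 \<and> (\<forall>k. i' < k \<and> k < j' \<longrightarrow> D k = 0)"
      using less.hyps[of k] less.prems k1 by (metis diff_less_mono2)
    thus ?thesis using k1 by (intro exI[of _ i'] exI[of _ j']) auto
  qed
qed

lemma tele_zero:
  fixes x :: "nat \<Rightarrow> real"
  shows "(\<forall>k. a \<le> k \<and> k < b \<longrightarrow> x (Suc k) = x k) \<Longrightarrow> a \<le> b \<Longrightarrow> x b = x a"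
  by (induction b) (auto simp: le_Suc_eq)

lemma tele_pos:
  fixes x :: "nat \<Rightarrow> real"
  shows "a \<le> b \<Longrightarrow> x a < x b \<Longrightarrow> \<exists>k. a \<le> k \<and> k < b \<and> x (Suc k) - x k > 0"
proof (induction b)
  case 0 thus ?case by auto
next
  case (Suc b)
  show ?case
  proof (cases "a = Suc b")
    case True thus ?thesis using Suc by auto
  next
    case False
    hence "a \<le> b" using Suc by auto
    show ?thesis
    proof (cases "x a < x b")
      case True thus ?thesis using Suc.IH \<open>a \<le> b\<close> by (metis less_SucI)
    next
      case False thus ?thesis using Suc.prems \<open>a \<le> b\<close> by (intro exI[of _ b]) auto
    qed
  qed
qed

lemma tele_neg:
  fixes x :: "nat \<Rightarrow> real"
  shows "a \<le> b \<Longrightarrow> x b < x a \<Longrightarrow> \<exists>k. a \<le> k \<and> k < b \<and> x (Suc k) - x k < 0"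
  using tele_pos[of a b "\<lambda>k. - x k"] by auto

definition quad :: "nat \<Rightarrow> (nat \<Rightarrow> real) \<Rightarrow> bool" where
  "quad n x \<longleftrightarrow> (\<exists>p q r s. p<q \<and> q<r \<and> r<s \<and> s<p+n \<and> x (Suc p) - x p > 0
      \<and> x (Suc q) - x q < 0 \<and> x (Suc r) - x r > 0 \<and> x (Suc s) - x s < 0)"

lemma core:
  fixes x :: "nat \<Rightarrow> real" and v :: "nat \<Rightarrow> real \<times> real"
  assumes per_x: "\<forall>k. x (k+n) = x k"
  and Dv: "\<forall>k. x (Suc k) - x k = cr (v k) (x k, c)"
  and Dv2: "\<forall>k. cr (v k) (x (Suc k), c) = a k * (x (Suc k) - x k)"
  and apos: "\<forall>k. a k > 0"
  and pol: "\<forall>k. v k \<noteq> (0,0) \<longrightarrow> \<rho> k > 0 \<and> v k = (\<rho> k * cos (\<Theta> k), \<rho> k * sin (\<Theta> k))"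
  and mono: "\<forall>i j. i \<le> j \<longrightarrow> v i \<noteq> (0,0) \<longrightarrow> v j \<noteq> (0,0) \<longrightarrow> \<Theta> i \<le> \<Theta> j"
  and perT: "\<forall>k. v k \<noteq> (0,0) \<longrightarrow> v (k+n) \<noteq> (0,0) \<and> \<Theta> (k+n) = \<Theta> k + 2*pi"
  and gam: "\<forall>m \<mu> t. (x m, c) = (t * cos \<mu>, t * sin \<mu>) \<longrightarrow> t * sin (\<mu> - \<gamma>) > 0"
  shows "\<not> quad n x"
proof
  define D where "D k = x (Suc k) - x k" for k
  have nz: "v k \<noteq> (0,0)" if "D k \<noteq> 0" for k
    using that Dv unfolding D_def cr_def by auto
  have betw: "\<exists>\<mu> t m. \<Theta> i < \<mu> \<and> \<mu> < \<Theta> j \<and> (x m, c) = (t * cos \<mu>, t * sin \<mu>) \<and> t * D i > 0"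
    if ij: "i < j" "j < i + n" and sg: "D i * D j < 0" for i j
  proof -
    have gen: "\<exists>\<mu> t m. \<Theta> i < \<mu> \<and> \<mu> < \<Theta> j \<and> (x m, c) = (t * cos \<mu>, t * sin \<mu>) \<and> t * e > 0"
      if e1: "e * D i > 0" "e * D j < 0" and e2: "e = 1 \<or> e = -1" for e
    proof -
      obtain i' j' where ij': "i \<le> i'" "i' < j'" "j' \<le> j" "e * D i' > 0" "e * D j' < 0"
        "\<forall>k. i' < k \<and> k < j' \<longrightarrow> e * D k = 0"
        using sign_change[of i j "\<lambda>k. e * D k"] ij e1 by auto
      have nzi: "D i' \<noteq> 0" "D j' \<noteq> 0" "D i \<noteq> 0" "D j \<noteq> 0" using ij' e1 by auto
      hence vnz: "v i' \<noteq> (0,0)" "v j' \<noteq> (0,0)" "v i \<noteq> (0,0)" "v j \<noteq> (0,0)" using nz by auto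
      have "\<forall>k. Suc i' \<le> k \<and> k < j' \<longrightarrow> x (Suc k) = x k"
        using ij'(6) e2 unfolding D_def by fastforce
      hence xe: "x j' = x (Suc i')" using tele_zero[of "Suc i'" j' x] ij' by auto
      define W where "W = (e * x (Suc i'), e * c)"
      have c1: "cr (v i') W > 0"
      proof -
        have "cr (v i') W = e * cr (v i') (x (Suc i'), c)" unfolding W_def cr_def by (simp add: algebra_simps)
        also have "\<dots> = a i' * (e * D i')" using Dv2 unfolding D_def by simp
        finally show ?thesis using apos ij' by simp
      qed
      have c2: "cr (v j') W < 0"
      proof -
        have "cr (v j') W = e * cr (v j') (x j', c)" unfolding W_def cr_def xe by (simp add: algebra_simps)
        also have "\<dots> = e * D j'" using Dv unfolding D_def by simp
        finally show ?thesis using ij' by simp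
      qed
      have "\<Theta> i' \<le> \<Theta> j'" using mono vnz ij' by auto
      moreover have "\<Theta> j' \<le> \<Theta> i' + 2*pi"
        using mono[rule_format, of j' "i'+n"] perT vnz ij' ij by auto
      ultimately obtain \<mu> t where mt: "\<Theta> i' < \<mu>" "\<mu> < \<Theta> j'" "W = (t * cos \<mu>, t * sin \<mu>)" "t > 0"
        using helperH[of "\<rho> i'" "\<rho> j'" "\<Theta> i'" "\<Theta> j'" W] pol vnz c1 c2 by auto
      have "\<Theta> i \<le> \<Theta> i'" "\<Theta> j' \<le> \<Theta> j" using mono vnz ij' by auto
      moreover have "(x (Suc i'), c) = ((e*t) * cos \<mu>, (e*t) * sin \<mu>)"
        using mt(3) e2 unfolding W_def by auto
      moreover have "(e*t) * e > 0" using e2 mt by auto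
      ultimately show ?thesis using mt by (intro exI[of _ \<mu>] exI[of _ "e*t"] exI[of _ "Suc i'"]) auto
    qed
    show ?thesis
    proof (cases "D i > 0")
      case True
      hence "D j < 0" using sg by (simp add: mult_less_0_iff)
      then obtain \<mu> t m where "\<Theta> i < \<mu> \<and> \<mu> < \<Theta> j \<and> (x m, c) = (t * cos \<mu>, t * sin \<mu>) \<and> t * 1 > 0"
        using gen[of 1] True by auto
      thus ?thesis using True by (intro exI[of _ \<mu>] exI[of _ t] exI[of _ m]) auto
    next
      case False
      hence "D i < 0" "D j > 0" using sg by (auto simp: mult_less_0_iff)
      then obtain \<mu> t m where "\<Theta> i < \<mu> \<and> \<mu> < \<Theta> j \<and> (x m, c) = (t * cos \<mu>, t * sin \<mu>) \<and> t * -1 > 0"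
        using gen[of "-1"] by auto
      thus ?thesis using \<open>D i < 0\<close> by (intro exI[of _ \<mu>] exI[of _ t] exI[of _ m]) (auto simp: mult_neg_neg)
    qed
  qed
  assume "quad n x"
  then obtain p q r s where pqrs: "p<q" "q<r" "r<s" "s<p+n" "D p > 0" "D q < 0" "D r > 0" "D s < 0"
    unfolding quad_def D_def by auto
  have Dpn: "D (p+n) = D p" unfolding D_def using per_x by (metis add_Suc)
  obtain \<mu>1 t1 m1 where m1: "\<Theta> p < \<mu>1" "\<mu>1 < \<Theta> q" "(x m1, c) = (t1 * cos \<mu>1, t1 * sin \<mu>1)" "t1 * D p > 0"
    using betw[of p q] pqrs by (auto simp: mult_pos_neg)
  obtain \<mu>2 t2 m2 where m2: "\<Theta> q < \<mu>2" "\<mu>2 < \<Theta> r" "(x m2, c) = (t2 * cos \<mu>2, t2 * sin \<mu>2)" "t2 * D q > 0"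
    using betw[of q r] pqrs by (auto simp: mult_neg_pos)
  obtain \<mu>3 t3 m3 where m3: "\<Theta> r < \<mu>3" "\<mu>3 < \<Theta> s" "(x m3, c) = (t3 * cos \<mu>3, t3 * sin \<mu>3)" "t3 * D r > 0"
    using betw[of r s] pqrs by (auto simp: mult_pos_neg)
  obtain \<mu>4 t4 m4 where m4: "\<Theta> s < \<mu>4" "\<mu>4 < \<Theta> (p+n)" "(x m4, c) = (t4 * cos \<mu>4, t4 * sin \<mu>4)" "t4 * D s > 0"
    using betw[of s "p+n"] pqrs Dpn by (auto simp: mult_neg_pos)
  have "v p \<noteq> (0,0)" using nz pqrs by auto
  hence Tpn: "\<Theta> (p+n) = \<Theta> p + 2*pi" using perT by auto
  have t: "t1 > 0" "t2 < 0" "t3 > 0" "t4 < 0" using m1 m2 m3 m4 pqrs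
    by (auto simp: zero_less_mult_iff)
  have g1: "t1 * sin (\<mu>1 - \<gamma>) > 0" "t2 * sin (\<mu>2 - \<gamma>) > 0" "t3 * sin (\<mu>3 - \<gamma>) > 0" "t4 * sin (\<mu>4 - \<gamma>) > 0"
    using gam m1 m2 m3 m4 by blast+
  have "sin (\<mu>1 - \<gamma>) > 0" "sin (\<mu>2 - \<gamma>) < 0" "sin (\<mu>3 - \<gamma>) > 0" "sin (\<mu>4 - \<gamma>) < 0"
    using g1 t by (auto simp: zero_less_mult_iff)
  moreover have "\<mu>1 < \<mu>2" "\<mu>2 < \<mu>3" "\<mu>3 < \<mu>4" "\<mu>4 < \<mu>1 + 2*pi"
    using m1 m2 m3 m4 Tpn by auto
  ultimately show False using four_contra by blast
qed



lemma per_mod: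
  fixes x :: "nat \<Rightarrow> 'a"
  assumes "\<forall>k. x (k+n) = x k"
  shows "x (k mod n) = x k"
proof -
  have "x (j + m*n) = x j" for j m
  proof (induction m)
    case 0 show ?case by simp
  next
    case (Suc m)
    have "x (j + Suc m * n) = x ((j + m*n) + n)" by (simp add: algebra_simps)
    thus ?case using Suc assms by simp
  qed
  from this[of "k mod n" "k div n"] show ?thesis by (simp add: mod_div_mult_eq)
qed

lemma unimodal_of_noquad:
  fixes x :: "nat \<Rightarrow> real"
  assumes n1: "n \<ge> 1" and per: "\<forall>k. x (k+n) = x k" and nq: "\<not> quad n x"
  shows "cyclic_unimodal n x"
proof -
  have pm: "x (k mod n) = x k" for k using per_mod[OF per] .
  have fin: "finite (x ` {..<n})" "x ` {..<n} \<noteq> {}" using n1 by (auto simp: lessThan_empty_iff)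
  obtain m where m: "m < n" "x m = Min (x ` {..<n})" using Min_in[OF fin] by auto
  obtain M where M: "M < n" "x M = Max (x ` {..<n})" using Max_in[OF fin] by auto
  have xmin: "x m \<le> x i" for i
  proof -
    have "i mod n < n" using n1 by auto
    hence "x m \<le> x (i mod n)" using m fin by auto
    thus ?thesis using pm by simp
  qed
  have xmax: "x i \<le> x M" for i
  proof -
    have "i mod n < n" using n1 by auto
    hence "x (i mod n) \<le> x M" using M fin by auto
    thus ?thesis using pm by simp
  qed
  define L where "L = (M + n - m) mod n"
  have Ln: "L < n" unfolding L_def using n1 by auto
  have "(m + L) mod n = M"
  proof -
    have "(m + L) mod n = (m + (M + n - m)) mod n" unfolding L_def by (simp add: mod_add_right_eq)
    also have "\<dots> = (M + n) mod n" using m by simp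
    also have "\<dots> = M" using M by simp
    finally show ?thesis .
  qed
  hence xL: "x (m + L) = x M" using pm by metis
  have xn: "x (m + n) = x m" using per by simp
  have up: "x (m+j) \<le> x (m+j+1)" if jL: "j < L" for j
  proof (rule ccontr)
    assume "\<not> ?thesis"
    hence dq: "x (Suc (m+j)) - x (m+j) < 0" by simp
    have "x m < x (m+j)" using xmin[of "Suc (m+j)"] dq by simp
    then obtain p where p: "m \<le> p" "p < m+j" "x (Suc p) - x p > 0" using tele_pos[of m "m+j" x] by auto
    have "x (Suc (m+j)) < x (m+L)" using xmax[of "m+j"] xL dq by simp
    then obtain r where r: "Suc (m+j) \<le> r" "r < m+L" "x (Suc r) - x r > 0"
      using tele_pos[of "Suc (m+j)" "m+L" x] jL by auto
    have "x (m+n) < x (m+L)" using xn xmin[of "Suc(m+j)"] \<open>x (Suc (m+j)) < x (m+L)\<close> by simp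
    then obtain s where s: "m+L \<le> s" "s < m+n" "x (Suc s) - x s < 0"
      using tele_neg[of "m+L" "m+n" x] Ln by auto
    have "quad n x" unfolding quad_def using p r s dq
      by (intro exI[of _ p] exI[of _ "m+j"] exI[of _ r] exI[of _ s]) auto
    thus False using nq by simp
  qed
  have down: "x (m+j) \<ge> x (m+j+1)" if jL: "L \<le> j" "j < n" for j
  proof (rule ccontr)
    assume "\<not> ?thesis"
    hence dr: "x (Suc (m+j)) - x (m+j) > 0" by simp
    have "x (m+j) < x (m+L)" using xmax[of "Suc (m+j)"] xL dr by simp
    then obtain q where q: "m+L \<le> q" "q < m+j" "x (Suc q) - x q < 0"
      using tele_neg[of "m+L" "m+j" x] jL by auto
    have "x m < x (m+L)" using xmin[of "m+j"] \<open>x (m+j) < x (m+L)\<close> by simp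
    then obtain p where p: "m \<le> p" "p < m+L" "x (Suc p) - x p > 0"
      using tele_pos[of m "m+L" x] by auto
    have "x (m+n) < x (Suc (m+j))" using xn xmin[of "m+j"] dr by simp
    then obtain s where s: "Suc (m+j) \<le> s" "s < m+n" "x (Suc s) - x s < 0"
      using tele_neg[of "Suc (m+j)" "m+n" x] jL by auto
    have "quad n x" unfolding quad_def using p q s dr
      by (intro exI[of _ p] exI[of _ q] exI[of _ "m+j"] exI[of _ s]) auto
    thus False using nq by simp
  qed
  have A: "\<forall>j < (M + n - m) mod n. x ((m + j) mod n) \<le> x ((m + j + 1) mod n)"
    using up pm unfolding L_def by metis
  have B: "\<forall>j. (M + n - m) mod n \<le> j \<and> j < n \<longrightarrow> x ((m + j) mod n) \<ge> x ((m + j + 1) mod n)"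
    using down pm unfolding L_def by metis
  show ?thesis unfolding cyclic_unimodal_def using A B m M by blast
qed

lemma cu_transfer:
  fixes F :: "nat \<Rightarrow> 'a::order" and G :: "nat \<Rightarrow> 'b::order"
  assumes eq: "\<forall>i<n. \<forall>j<n. (F i \<le> F j) = (G i \<le> G j)" and g: "cyclic_unimodal n G"
  shows "cyclic_unimodal n F"
proof -
  obtain k l where kl: "k<n" "l<n"
    "\<forall>j < (l + n - k) mod n. G ((k + j) mod n) \<le> G ((k + j + 1) mod n)"
    "\<forall>j. (l + n - k) mod n \<le> j \<and> j < n \<longrightarrow> G ((k + j) mod n) \<ge> G ((k + j + 1) mod n)"
    using g unfolding cyclic_unimodal_def by blast
  have np: "n > 0" using kl by auto
  have md: "a mod n < n" for a using np by auto
  show ?thesis unfolding cyclic_unimodal_def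
    by (rule exI[of _ k], rule conjI[OF kl(1)], rule exI[of _ l]) (use kl eq md in auto)
qed



lemma comp_cong: "(\<forall>i. 1 \<le> i \<and> i \<le> m \<longrightarrow> \<sigma> i = \<sigma>' i) \<Longrightarrow> comp_upto f \<sigma> m = comp_upto f \<sigma>' m"
  by (induction m) auto

lemma comp_split: "comp_upto f \<sigma> (Suc m) = comp_upto f (\<lambda>i. \<sigma> (Suc i)) m \<circ> lin_fun (f (\<sigma> 1))"
  by (induction m) (auto simp: fun_eq_iff)

lemma comp_affine: "\<exists>\<alpha> \<beta>. comp_upto f \<sigma> m = (\<lambda>y. \<alpha>*y+\<beta>)"
proof (induction m)
  case 0 show ?case by (rule exI[of _ 1], rule exI[of _ 0]) auto
next
  case (Suc m)
  then obtain \<alpha> \<beta> where e: "comp_upto f \<sigma> m = (\<lambda>y. \<alpha>*y+\<beta>)" by auto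
  show ?case
    by (rule exI[of _ "fst (f (\<sigma> (Suc m))) * \<alpha>"], rule exI[of _ "fst (f (\<sigma> (Suc m))) * \<beta> + snd (f (\<sigma> (Suc m)))"])
       (auto simp: e lin_fun_def algebra_simps)
qed

lemma step_comp:
  assumes kn: "k < n" and aff: "composite f n (shift n \<tau> k) = (\<lambda>y. A*y + B)"
  shows "composite f n (shift n \<tau> (Suc k)) =
     (\<lambda>y. A*y + (fst (f (\<tau> (Suc k))) * B + snd (f (\<tau> (Suc k))) * (1 - A)))"
proof -
  obtain m where nm: "n = Suc m" using kn by (cases n) auto
  define \<sigma> where "\<sigma> = shift n \<tau> k"
  define \<sigma>1 where "\<sigma>1 = shift n \<tau> (Suc k)"
  define g where "g = f (\<tau> (Suc k))"
  have s1: "\<sigma> 1 = \<tau> (Suc k)" unfolding \<sigma>_def shift_def using kn by auto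
  have s1n: "\<sigma>1 (Suc m) = \<tau> (Suc k)" unfolding \<sigma>1_def shift_def using kn nm by auto
  have cg: "comp_upto f \<sigma>1 m = comp_upto f (\<lambda>i. \<sigma> (Suc i)) m"
    by (rule comp_cong) (use kn nm in \<open>auto simp: \<sigma>_def \<sigma>1_def shift_def\<close>)
  obtain \<alpha> \<beta> where ab: "comp_upto f (\<lambda>i. \<sigma> (Suc i)) m = (\<lambda>y. \<alpha>*y+\<beta>)" using comp_affine by blast
  have F: "composite f n \<sigma> = (\<lambda>y. \<alpha>*(fst g * y + snd g)+\<beta>)"
    unfolding composite_def nm comp_split s1 ab g_def by (auto simp: lin_fun_def)
  have G: "composite f n \<sigma>1 = (\<lambda>y. fst g * (\<alpha>*y+\<beta>) + snd g)"
    unfolding composite_def nm comp_upto.simps s1n cg ab g_def by (auto simp: lin_fun_def)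
  have e0: "B = \<alpha> * snd g + \<beta>" using fun_cong[OF F[unfolded \<sigma>_def aff], of 0] by simp
  have e1: "A + B = \<alpha> * (fst g + snd g) + \<beta>" using fun_cong[OF F[unfolded \<sigma>_def aff], of 1] by simp
  have eA: "A = \<alpha> * fst g" using e0 e1 by (simp add: algebra_simps)
  show ?thesis unfolding \<sigma>1_def[symmetric] G g_def[symmetric]
    by (rule ext) (simp add: eA e0 algebra_simps)
qed



lemma polar_some:
  assumes "w \<noteq> (0,0)"
  shows "\<exists>t. polar_angle w = Some t \<and> 0 \<le> t \<and> t < 2*pi \<and>
     w = (sqrt ((fst w)\<^sup>2 + (snd w)\<^sup>2) * cos t, sqrt ((fst w)\<^sup>2 + (snd w)\<^sup>2) * sin t)"
proof -
  obtain X C where W: "w = (X, C)" by (cases w)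
  define r where "r = sqrt (X\<^sup>2 + C\<^sup>2)"
  have "X \<noteq> 0 \<or> C \<noteq> 0" using assms W by auto
  hence "X\<^sup>2 + C\<^sup>2 > 0" by (metis add_pos_nonneg add_nonneg_pos zero_less_power2 zero_le_power2)
  hence rp: "r > 0" unfolding r_def by simp
  have r2: "r\<^sup>2 = X\<^sup>2 + C\<^sup>2" unfolding r_def by simp
  have "(X/r)\<^sup>2 + (C/r)\<^sup>2 = 1"
  proof -
    have "(X/r)\<^sup>2 + (C/r)\<^sup>2 = (X\<^sup>2 + C\<^sup>2) / r\<^sup>2" by (simp add: power_divide add_divide_distrib)
    also have "\<dots> = r\<^sup>2 / r\<^sup>2" using r2 by simp
    also have "\<dots> = 1" using rp by simp
    finally show ?thesis .
  qed
  then obtain t0 where t0: "0 \<le> t0" "t0 < 2*pi" "X/r = cos t0" "C/r = sin t0" using sincos_total_2pi by metis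
  define P where "P t \<longleftrightarrow> 0 \<le> t \<and> t < 2 * pi \<and> X = r * cos t \<and> C = r * sin t" for t
  have Pt0: "P t0" unfolding P_def using t0 rp by (simp add: field_simps)
  have uniq: "t = t0" if "P t" for t
  proof -
    have "sin t = sin t0 \<and> cos t = cos t0" using that Pt0 rp unfolding P_def by auto
    then obtain k :: int where k: "t = t0 + 2*pi*of_int k" using sin_cos_eq_iff by blast
    have h1: "pi * of_int k < pi * 1" "pi * (-1) < pi * of_int k" using k that Pt0 unfolding P_def by linarith+
    have "of_int k < (1::real)" "(-1::real) < of_int k"
      using h1 mult_less_cancel_left_pos[OF pi_gt_zero] by blast+
    hence "k = 0" by linarith
    thus ?thesis using k by simp
  qed
  have "(THE t. P t) = t0" using Pt0 uniq by (rule the_equality)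
  moreover have "polar_angle w = Some (THE t. P t)" unfolding polar_angle_def P_def r_def using assms W by simp
  ultimately show ?thesis using Pt0 unfolding P_def r_def W by auto
qed

lemma ident_iff: "identical_lin p \<longleftrightarrow> lin_vec p = (0,0)"
proof
  assume "identical_lin p"
  hence "lin_fun p 0 = 0" "lin_fun p 1 = 1" unfolding identical_lin_def by auto
  thus "lin_vec p = (0,0)" unfolding lin_fun_def lin_vec_def by auto
next
  assume "lin_vec p = (0,0)"
  thus "identical_lin p" unfolding lin_fun_def lin_vec_def identical_lin_def by (auto simp: fun_eq_iff)
qed

lemma filter_append_conv:
  "filter P xs = ys @ zs \<Longrightarrow> \<exists>us vs. xs = us @ vs \<and> filter P us = ys \<and> filter P vs = zs"
proof (induction xs arbitrary: ys)
  case Nil thus ?case by auto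
next
  case (Cons x xs)
  show ?case
  proof (cases "P x")
    case True
    show ?thesis
    proof (cases ys)
      case Nil
      thus ?thesis using Cons.prems by (intro exI[of _ "[]"] exI[of _ "x#xs"]) auto
    next
      case (Cons y ys')
      hence "filter P xs = ys' @ zs" using Cons.prems True by auto
      then obtain us vs where "xs = us @ vs \<and> filter P us = ys' \<and> filter P vs = zs" using Cons.IH by blast
      thus ?thesis using Cons.prems True \<open>ys = y # ys'\<close> by (intro exI[of _ "x#us"] exI[of _ vs]) auto
    qed
  next
    case False
    hence "filter P xs = ys @ zs" using Cons.prems by auto
    then obtain us vs where "xs = us @ vs \<and> filter P us = ys \<and> filter P vs = zs" using Cons.IH by blast
    thus ?thesis using False by (intro exI[of _ "x#us"] exI[of _ vs]) auto
  qed
qed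

lemma sorted_pairs:
  "sorted_wrt Q zs \<Longrightarrow> sorted_wrt (<) zs \<Longrightarrow> (i::nat) \<in> set zs \<Longrightarrow> j \<in> set zs \<Longrightarrow> i < j \<Longrightarrow> Q i j"
proof (induction zs)
  case Nil thus ?case by auto
next
  case (Cons z zs)
  show ?case
  proof (cases "i = z")
    case True
    hence "j \<in> set zs" using Cons.prems by auto
    thus ?thesis using Cons.prems True by auto
  next
    case False
    hence "i \<in> set zs" using Cons.prems by auto
    hence "z < i" using Cons.prems by auto
    hence "j \<in> set zs" using Cons.prems by auto
    thus ?thesis using Cons \<open>i \<in> set zs\<close> by auto
  qed
qed

lemma upt_rot:
  assumes "1 \<le> R" "R \<le> n+1"
  shows "[R..<n+1] @ [1..<R] = map (\<lambda>a. (a + (R - 1)) mod n + 1) [0..<n]"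
proof (rule nth_equalityI)
  show "length ([R..<n+1] @ [1..<R]) = length (map (\<lambda>a. (a + (R - 1)) mod n + 1) [0..<n])"
    using assms by auto
next
  fix a assume "a < length ([R..<n+1] @ [1..<R])"
  hence "a < (n+1-R) + (R-1)" by (simp only: length_append length_upt)
  hence a: "a < n" using assms by linarith
  show "([R..<n+1] @ [1..<R]) ! a = map (\<lambda>a. (a + (R - 1)) mod n + 1) [0..<n] ! a"
  proof (cases "a < n + 1 - R")
    case True
    hence "a + (R - 1) < n" using assms by linarith
    thus ?thesis using True a assms by (simp add: nth_append del: upt_Suc)
  next
    case False
    hence "n \<le> a + (R - 1)" "a + (R - 1) - n < n" using assms a by linarith+
    hence "(a + (R - 1)) mod n = a + (R - 1) - n" by (simp add: le_mod_geq)
    thus ?thesis using False a assms by (simp add: nth_append del: upt_Suc)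
  qed
qed

lemma rot_sorted:
  fixes h :: "nat \<Rightarrow> real" and Q :: "nat \<Rightarrow> bool"
  assumes "\<exists>k. sorted (rotate k (map h (filter Q [1..<n+1])))"
  shows "\<exists>r0 \<le> n. \<forall>a b. a < b \<longrightarrow> b < n \<longrightarrow> Q ((a + r0) mod n + 1) \<longrightarrow> Q ((b + r0) mod n + 1)
     \<longrightarrow> h ((a + r0) mod n + 1) \<le> h ((b + r0) mod n + 1)"
proof -
  define L where "L = map h (filter Q [1..<n+1])"
  obtain k where "sorted (rotate k L)" using assms unfolding L_def by blast
  define j where "j = k mod length L"
  have s: "sorted (drop j L @ take j L)" using \<open>sorted (rotate k L)\<close> unfolding j_def by (simp add: rotate_drop_take)
  have "map h (filter Q [1..<n+1]) = take j L @ drop j L" unfolding L_def by simp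
  then obtain us vs where uv: "filter Q [1..<n+1] = us @ vs" "take j L = map h us" "drop j L = map h vs"
    using map_eq_append_conv by metis
  then obtain U1 U2 where U: "[1..<n+1] = U1 @ U2" "filter Q U1 = us" "filter Q U2 = vs"
    using filter_append_conv by metis
  define R where "R = 1 + length U1"
  have "length (U1 @ U2) = n" unfolding U(1)[symmetric] by simp
  hence lU: "length U1 \<le> n" by simp
  have U1: "U1 = [1..<R]"
  proof -
    have "U1 = take (length U1) [1..<n+1]" using U(1) by simp
    also have "\<dots> = [1..<1 + length U1]" by (rule take_upt) (use lU in simp)
    also have "\<dots> = [1..<R]" unfolding R_def ..
    finally show ?thesis .
  qed
  have U2: "U2 = [R..<n+1]"
  proof -
    have "U2 = drop (length U1) [1..<n+1]" using U(1) by simp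
    also have "\<dots> = [R..<n+1]" unfolding R_def by (simp add: drop_upt add.commute)
    finally show ?thesis .
  qed
  define r0 where "r0 = R - 1"
  have r0n: "r0 \<le> n" using lU unfolding r0_def R_def by simp
  define \<phi> where "\<phi> a = (a + r0) mod n + 1" for a
  have "U2 @ U1 = map \<phi> [0..<n]" unfolding U1 U2 \<phi>_def r0_def using lU R_def by (intro upt_rot) auto
  hence "sorted (map h (filter Q (map \<phi> [0..<n])))" using s uv U by (metis filter_append map_append)
  hence ss: "sorted_wrt (\<lambda>x y. h (\<phi> x) \<le> h (\<phi> y)) (filter (Q \<circ> \<phi>) [0..<n])"
    by (simp add: filter_map sorted_map)
  have sl: "sorted_wrt (<) (filter (Q \<circ> \<phi>) [0..<n])" by (rule sorted_wrt_filter) (rule sorted_wrt_upt)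
  show ?thesis
  proof (intro exI[of _ r0] conjI allI impI)
    fix a b assume ab: "a < b" "b < n" "Q ((a + r0) mod n + 1)" "Q ((b + r0) mod n + 1)"
    have "a \<in> set (filter (Q \<circ> \<phi>) [0..<n])" "b \<in> set (filter (Q \<circ> \<phi>) [0..<n])"
      using ab unfolding \<phi>_def by auto
    from sorted_pairs[OF ss sl this ab(1)] show "h ((a + r0) mod n + 1) \<le> h ((b + r0) mod n + 1)"
      unfolding \<phi>_def .
  qed (rule r0n)
qed



lemma lc: "[h i. i \<leftarrow> xs, Q i] = map h (filter Q xs)" by (induct xs) auto

theorem mainTheorem11:
  fixes f :: "nat \<Rightarrow> real \<times> real" and \<tau> :: "nat \<Rightarrow> nat" and n :: nat
  assumes "n \<ge> 1"
    and "\<forall>i\<in>{1..n}. monotone_lin (f i)"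
    and "bij_betw \<tau> {1..n} {1..n}"
    and "counterclockwise f n \<tau>"
  shows "cyclic_unimodal n (\<lambda>k. composite f n (shift n \<tau> k))"
proof -
  note n1 = assms(1)
  have trange: "\<tau> i \<in> {1..n}" if "i \<in> {1..n}" for i by (rule bij_betw_apply[OF assms(3) that])
  define g where "g k = f (\<tau> (Suc (k mod n)))" for k
  have gpos: "fst (g k) > 0" for k
  proof -
    have "Suc (k mod n) \<in> {1..n}" using n1 by (simp add: Suc_leI)
    hence "\<tau> (Suc (k mod n)) \<in> {1..n}" by (rule trange)
    hence "monotone_lin (f (\<tau> (Suc (k mod n))))" using assms(2) by blast
    thus ?thesis unfolding g_def monotone_lin_def .
  qed
  obtain A B0 where AB: "composite f n (shift n \<tau> 0) = (\<lambda>y. A*y + B0)"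
    unfolding composite_def using comp_affine by blast
  have aff: "composite f n (shift n \<tau> k) = (\<lambda>y. A*y + composite f n (shift n \<tau> k) 0)" if "k < n" for k
    using that
  proof (induction k)
    case 0 show ?case using AB by simp
  next
    case (Suc k)
    hence "k < n" by simp
    from step_comp[OF this Suc.IH[OF this]] show ?case by (simp del: composite_def)
  qed
  define X where "X k = composite f n (shift n \<tau> (k mod n)) 0" for k
  define c where "c = 1 - A"
  have shn: "composite f n (shift n \<tau> n) = composite f n (shift n \<tau> 0)"
    unfolding composite_def by (rule comp_cong) (auto simp: shift_def)
  have rec: "X (Suc k) = fst (g k) * X k + snd (g k) * c" for k
  proof -
    define j where "j = k mod n"
    have jn: "j < n" unfolding j_def using n1 by simp
    have st: "composite f n (shift n \<tau> (Suc j)) 0 = fst (g k) * X k + snd (g k) * c"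
      using fun_cong[OF step_comp[OF jn aff[OF jn]], of 0] unfolding g_def X_def c_def j_def by simp
    have "Suc k mod n = Suc j mod n" unfolding j_def by (simp add: mod_Suc_eq)
    show ?thesis
    proof (cases "Suc j < n")
      case True
      hence "Suc k mod n = Suc j" using \<open>Suc k mod n = Suc j mod n\<close> by simp
      thus ?thesis using st unfolding X_def by simp
    next
      case False
      hence "Suc j = n" using jn by simp
      hence "Suc k mod n = 0" using \<open>Suc k mod n = Suc j mod n\<close> by simp
      thus ?thesis using st shn \<open>Suc j = n\<close> unfolding X_def by simp
    qed
  qed
  have perX: "\<forall>k. X (k+n) = X k" unfolding X_def by simp
  have nqX: "\<not> quad n X"
  proof -
    define h where "h i = the (theta (f (\<tau> i)))" for i
    define Q where "Q i \<longleftrightarrow> \<not> identical_lin (f (\<tau> i))" for i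
    have "\<exists>k. sorted (rotate k (map h (filter Q [1..<n+1])))"
      using assms(4) unfolding counterclockwise_def Let_def h_def Q_def
      by (simp only: lc)
    then obtain r0 where r0: "r0 \<le> n" and srt: "\<forall>a b. a < b \<longrightarrow> b < n \<longrightarrow> Q ((a + r0) mod n + 1) \<longrightarrow> Q ((b + r0) mod n + 1)
     \<longrightarrow> h ((a + r0) mod n + 1) \<le> h ((b + r0) mod n + 1)"
      using rot_sorted by blast
    define \<phi> where "\<phi> a = (a + r0) mod n + 1" for a
    have np: "n > 0" using n1 by simp
    have phir: "\<phi> a \<in> {1..n}" for a unfolding \<phi>_def using np by (simp add: Suc_leI)
    define x' where "x' k = X (k + r0)" for k
    define v where "v k = lin_vec (g (k + r0))" for k
    define a' where "a' k = fst (g (k + r0))" for k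
    define \<Theta> where "\<Theta> k = h (\<phi> (k mod n)) + 2*pi*real (k div n)" for k
    define \<rho> where "\<rho> k = sqrt ((fst (v k))\<^sup>2 + (snd (v k))\<^sup>2)" for k
    have gphi: "g (k + r0) = f (\<tau> (\<phi> (k mod n)))" for k
      unfolding g_def \<phi>_def by (simp add: mod_add_left_eq)
    have vQ: "v k \<noteq> (0,0) \<longleftrightarrow> Q (\<phi> (k mod n))" for k
      unfolding v_def Q_def gphi ident_iff by simp
    have hpol: "0 \<le> h i \<and> h i < 2*pi \<and> lin_vec (f (\<tau> i)) =
        (sqrt ((fst (lin_vec (f (\<tau> i))))\<^sup>2 + (snd (lin_vec (f (\<tau> i))))\<^sup>2) * cos (h i),
         sqrt ((fst (lin_vec (f (\<tau> i))))\<^sup>2 + (snd (lin_vec (f (\<tau> i))))\<^sup>2) * sin (h i))" if "Q i" for i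
    proof -
      have "lin_vec (f (\<tau> i)) \<noteq> (0,0)" using that unfolding Q_def ident_iff .
      from polar_some[OF this] obtain t where t: "polar_angle (lin_vec (f (\<tau> i))) = Some t" "0 \<le> t" "t < 2*pi"
        "lin_vec (f (\<tau> i)) = (sqrt ((fst (lin_vec (f (\<tau> i))))\<^sup>2 + (snd (lin_vec (f (\<tau> i))))\<^sup>2) * cos t,
         sqrt ((fst (lin_vec (f (\<tau> i))))\<^sup>2 + (snd (lin_vec (f (\<tau> i))))\<^sup>2) * sin t)" by blast
      have "h i = t" unfolding h_def theta_def t(1) by simp
      thus ?thesis using t by simp
    qed
    have key: "\<not> quad n x'" if gam: "\<forall>m \<mu> t. (x' m, c) = (t * cos \<mu>, t * sin \<mu>) \<longrightarrow> t * sin (\<mu> - \<gamma>) > 0" for \<gamma>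
    proof (rule core[of x' n v c a' \<rho> \<Theta> \<gamma>])
      show "\<forall>k. x' (k + n) = x' k"
      proof
        fix k
        have "x' (k + n) = X ((k + r0) + n)" unfolding x'_def by (simp add: ac_simps)
        thus "x' (k + n) = x' k" using perX unfolding x'_def by simp
      qed
      show "\<forall>k. x' (Suc k) - x' k = cr (v k) (x' k, c)"
        unfolding x'_def v_def by (simp add: rec cr_def lin_vec_def algebra_simps)
      show "\<forall>k. cr (v k) (x' (Suc k), c) = a' k * (x' (Suc k) - x' k)"
        unfolding x'_def v_def a'_def by (simp add: rec cr_def lin_vec_def algebra_simps)
      show "\<forall>k. a' k > 0" unfolding a'_def using gpos by simp
      show "\<forall>k. v k \<noteq> (0,0) \<longrightarrow> \<rho> k > 0 \<and> v k = (\<rho> k * cos (\<Theta> k), \<rho> k * sin (\<Theta> k))"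
      proof (intro allI impI)
        fix k assume vk: "v k \<noteq> (0,0)"
        hence "Q (\<phi> (k mod n))" using vQ by simp
        from hpol[OF this] have hp: "v k = (\<rho> k * cos (h (\<phi> (k mod n))), \<rho> k * sin (h (\<phi> (k mod n))))"
          unfolding \<rho>_def v_def gphi by blast
        have per: "sin (\<Theta> k) = sin (h (\<phi> (k mod n))) \<and> cos (\<Theta> k) = cos (h (\<phi> (k mod n)))"
          using sc_per[of "h (\<phi> (k mod n))" "int (k div n)"] unfolding \<Theta>_def by simp
        have "\<rho> k \<ge> 0" unfolding \<rho>_def by simp
        moreover have "\<rho> k \<noteq> 0" using hp vk by auto
        ultimately show "\<rho> k > 0 \<and> v k = (\<rho> k * cos (\<Theta> k), \<rho> k * sin (\<Theta> k))" using hp per by simp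
      qed
      show "\<forall>i j. i \<le> j \<longrightarrow> v i \<noteq> (0,0) \<longrightarrow> v j \<noteq> (0,0) \<longrightarrow> \<Theta> i \<le> \<Theta> j"
      proof (intro allI impI)
        fix i j assume ij: "i \<le> j" "v i \<noteq> (0,0)" "v j \<noteq> (0,0)"
        have Qi: "Q (\<phi> (i mod n))" "Q (\<phi> (j mod n))" using ij vQ by auto
        have hb: "0 \<le> h (\<phi> (i mod n))" "h (\<phi> (i mod n)) < 2*pi" "0 \<le> h (\<phi> (j mod n))" "h (\<phi> (j mod n)) < 2*pi"
          using hpol[OF Qi(1)] hpol[OF Qi(2)] by blast+
        have dle: "i div n \<le> j div n" using ij by (simp add: div_le_mono)
        show "\<Theta> i \<le> \<Theta> j"
        proof (cases "i div n < j div n")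
          case True
          hence "real (i div n) + 1 \<le> real (j div n)" by linarith
          hence "2*pi*(real (i div n) + 1) \<le> 2*pi*real (j div n)" by simp
          thus ?thesis unfolding \<Theta>_def using hb by (simp add: algebra_simps)
        next
          case False
          hence deq: "i div n = j div n" using dle by simp
          have "i mod n \<le> j mod n"
          proof -
            have "j div n * n + i mod n \<le> j div n * n + j mod n"
              using deq ij(1) by (metis div_mult_mod_eq)
            thus ?thesis by (rule add_le_imp_le_left)
          qed
          show ?thesis
          proof (cases "i mod n = j mod n")
            case True thus ?thesis unfolding \<Theta>_def using deq by simp
          next
            case False
            hence "i mod n < j mod n" using \<open>i mod n \<le> j mod n\<close> by simp
            moreover have "j mod n < n" using np by simp
            ultimately have "h (\<phi> (i mod n)) \<le> h (\<phi> (j mod n))" using srt Qi unfolding \<phi>_def by blast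
            thus ?thesis unfolding \<Theta>_def using deq by simp
          qed
        qed
      qed
      show "\<forall>k. v k \<noteq> (0,0) \<longrightarrow> v (k+n) \<noteq> (0,0) \<and> \<Theta> (k+n) = \<Theta> k + 2*pi"
      proof (intro allI impI)
        fix k assume "v k \<noteq> (0,0)"
        moreover have "v (k+n) = v k"
        proof -
          have e: "k + n + r0 = (k + r0) + n" by simp
          show ?thesis unfolding v_def g_def e by simp
        qed
        moreover have "\<Theta> (k+n) = \<Theta> k + 2*pi" unfolding \<Theta>_def using np by (simp add: algebra_simps)
        ultimately show "v (k+n) \<noteq> (0,0) \<and> \<Theta> (k+n) = \<Theta> k + 2*pi" by simp
      qed
      show "\<forall>m \<mu> t. (x' m, c) = (t * cos \<mu>, t * sin \<mu>) \<longrightarrow> t * sin (\<mu> - \<gamma>) > 0" by (rule gam)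
    qed
    have tr: "x' (k + n - r0) = X k" "x' (Suc (k + n - r0)) = X (Suc k)" for k
    proof -
      have "k + n - r0 + r0 = k + n" "Suc (k + n - r0) + r0 = Suc k + n" using r0 by simp_all
      thus "x' (k + n - r0) = X k" "x' (Suc (k + n - r0)) = X (Suc k)" unfolding x'_def using perX by (simp, metis add_Suc)
    qed
    have transl: "\<not> quad n X" if "\<not> quad n x'"
    proof
      assume "quad n X"
      then obtain p q r s where pqrs: "p<q" "q<r" "r<s" "s<p+n" "X (Suc p) - X p > 0"
        "X (Suc q) - X q < 0" "X (Suc r) - X r > 0" "X (Suc s) - X s < 0" unfolding quad_def by blast
      have "quad n x'" unfolding quad_def
        by (rule exI[of _ "p+n-r0"], rule exI[of _ "q+n-r0"], rule exI[of _ "r+n-r0"], rule exI[of _ "s+n-r0"])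
           (use pqrs r0 tr in auto)
      thus False using that by simp
    qed
    show ?thesis
    proof (cases "c = 0")
      case False
      show ?thesis
      proof (cases "c > 0")
        case True
        have "\<not> quad n x'"
          by (rule key[of 0]) (use True in auto)
        thus ?thesis by (rule transl)
      next
        case False
        hence "c < 0" using \<open>c \<noteq> 0\<close> by simp
        have "\<not> quad n x'"
          by (rule key[of pi]) (use \<open>c < 0\<close> in \<open>auto simp: mult_neg_neg\<close>)
        thus ?thesis by (rule transl)
      qed
    next
      case True
      have recc: "X (Suc k) = fst (g k) * X k" for k using rec[of k] True by simp
      consider "X 0 > 0" | "X 0 < 0" | "X 0 = 0" by linarith
      thus ?thesis
      proof cases
        case 1
        have pos: "X k > 0" for k by (induction k) (use 1 gpos recc in auto)
        have "\<not> quad n x'"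
        proof (rule key[of "-(pi/2)"], intro allI impI)
          fix m \<mu> t assume "(x' m, c) = (t * cos \<mu>, t * sin \<mu>)"
          hence "t * cos \<mu> > 0" using pos unfolding x'_def by (metis prod.inject)
          thus "t * sin (\<mu> - -(pi/2)) > 0" by (simp add: sin_add)
        qed
        thus ?thesis by (rule transl)
      next
        case 2
        have neg: "X k < 0" for k by (induction k) (use 2 gpos recc in \<open>auto simp: mult_pos_neg\<close>)
        have "\<not> quad n x'"
        proof (rule key[of "pi/2"], intro allI impI)
          fix m \<mu> t assume "(x' m, c) = (t * cos \<mu>, t * sin \<mu>)"
          hence "t * cos \<mu> < 0" using neg unfolding x'_def by (metis prod.inject)
          thus "t * sin (\<mu> - pi/2) > 0" by (simp add: sin_diff)
        qed
        thus ?thesis by (rule transl)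
      next
        case 3
        have z: "X k = 0" for k by (induction k) (use 3 recc in auto)
        show ?thesis unfolding quad_def using z by simp
      qed
    qed
  qed
  have "cyclic_unimodal n X" using unimodal_of_noquad[OF n1 perX nqX] .
  moreover have "\<forall>i<n. \<forall>j<n. (composite f n (shift n \<tau> i) \<le> composite f n (shift n \<tau> j)) = (X i \<le> X j)"
  proof (intro allI impI)
    fix i j assume "i < n" "j < n"
    hence e: "X i = composite f n (shift n \<tau> i) 0" "X j = composite f n (shift n \<tau> j) 0" unfolding X_def by auto
    have "composite f n (shift n \<tau> i) = (\<lambda>y. A*y + X i)" "composite f n (shift n \<tau> j) = (\<lambda>y. A*y + X j)"
      unfolding e by (rule aff[OF \<open>i<n\<close>], rule aff[OF \<open>j<n\<close>])
    thus "(composite f n (shift n \<tau> i) \<le> composite f n (shift n \<tau> j)) = (X i \<le> X j)"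
      by (simp add: le_fun_def)
  qed
  ultimately show ?thesis by (rule cu_transfer[rotated])
qed

end
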